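(* Assume $(g,\mathfrak{D})$ satisfy B1–B3 with constant $\kappa>0$. Then for every $X\in\mathbb{R}^{m\times n}$ and every $D\in\mathfrak{D}$, with the norm $\|\cdot\|=\|\cdot\|_{1\to2}$, $$L_X(D)\le\frac{2}{n\sqrt\kappa}\|X\|_F^2,\qquad C_X(D)\le\frac{2}{n\kappa}\|X\|_F^2.$$
   Context: $\mathfrak{D}\subset\mathbb{R}^{m\times d}$. B1: $g=\chi_{\mathcal K}$ is the indicator of a set $\mathcal K\subset\mathbb{R}^d$ ($0$ on $\mathcal K$, $+\infty$ outside); B2: $\kappa\|\alpha\|_1^2\le\|D\alpha\|_2^2$ for all $\alpha\in\mathcal K$, $D\in\mathfrak{D}$; B3: $0\in\mathcal K$. $\mathcal{L}_x(D,\alpha)=\tfrac12\|x-D\alpha\|_2^2+g(\alpha)$, $f_x(D)=\inf_\alpha\mathcal{L}_x(D,\alpha)$. $\|\Delta\|_{1\to2}=\max_j\|\delta_j\|_2$ with dual norm $\|\cdot\|_\star$ w.r.t. the Frobenius inner product. For $X=[x_1,\dots,x_n]$ and $\epsilon>0$, $\mathfrak{A}_\epsilon(X,D)=\{A=[\alpha_1,\dots,\alpha_n]:\ \mathcal{L}_{x_i}(D,\alpha_i)\le f_{x_i}(D)+\epsilon\ \forall i\}$; $L_X(D)=\inf_{\epsilon>0}\sup_{A\in\mathfrak{A}_\epsilon(X,D)}\frac1n\|(X-DA)A^\top\|_\star$, $C_X(D)=\inf_{\epsilon>0}\sup_{A\in\mathfrak{A}_\epsilon(X,D)}\frac1{2n}\sum_i\|\alpha_i\|_1^2$.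 *)

theory Defs
  imports "HOL-Analysis.Analysis"
begin

text \<open>Matrices in R^{m x d} are rendered as real^'d^'m (rows indexed by 'm, columns by 'd);
  columns are obtained with column.  Extended-real values are used for g, L, f, sup, inf.\<close>

definition chi :: "(real^'d) set \<Rightarrow> real^'d \<Rightarrow> ereal" where
  "chi K \<alpha> = (if \<alpha> \<in> K then 0 else \<infinity>)"

definition l1norm :: "real^'d \<Rightarrow> real" where
  "l1norm \<alpha> = (\<Sum>j\<in>UNIV. \<bar>\<alpha> $ j\<bar>)"

definition norm12 :: "real^'d^'m \<Rightarrow> real" where
  "norm12 M = Max (range (\<lambda>j. norm (column j M)))"

definition frob_inner :: "real^'d^'m \<Rightarrow> real^'d^'m \<Rightarrow> real" where
  "frob_inner M N = (\<Sum>i\<in>UNIV. \<Sum>j\<in>UNIV. M $ i $ j * N $ i $ j)"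

definition dual12 :: "real^'d^'m \<Rightarrow> real" where
  "dual12 M = Sup {frob_inner M \<Delta> | \<Delta>. norm12 \<Delta> \<le> 1}"

definition frob_sq :: "real^'n^'m \<Rightarrow> real" where
  "frob_sq X = (\<Sum>i\<in>UNIV. \<Sum>j\<in>UNIV. (X $ i $ j)^2)"

definition LL :: "(real^'d \<Rightarrow> ereal) \<Rightarrow> real^'m \<Rightarrow> real^'d^'m \<Rightarrow> real^'d \<Rightarrow> ereal" where
  "LL g x D \<alpha> = ereal (1/2 * (norm (x - D *v \<alpha>))^2) + g \<alpha>"

definition ff :: "(real^'d \<Rightarrow> ereal) \<Rightarrow> real^'m \<Rightarrow> real^'d^'m \<Rightarrow> ereal" where
  "ff g x D = (INF \<alpha>. LL g x D \<alpha>)"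

definition Aeps :: "(real^'d \<Rightarrow> ereal) \<Rightarrow> real \<Rightarrow> real^'n^'m \<Rightarrow> real^'d^'m \<Rightarrow> (real^'n^'d) set" where
  "Aeps g eps X D = {A. \<forall>i. LL g (column i X) D (column i A) \<le> ff g (column i X) D + ereal eps}"

definition LX :: "(real^'d \<Rightarrow> ereal) \<Rightarrow> real^'n^'m \<Rightarrow> real^'d^'m \<Rightarrow> ereal" where
  "LX g X D = (INF eps\<in>{0<..}. SUP A\<in>Aeps g eps X D.
      ereal (dual12 ((X - D ** A) ** transpose A) / real CARD('n)))"

definition CX :: "(real^'d \<Rightarrow> ereal) \<Rightarrow> real^'n^'m \<Rightarrow> real^'d^'m \<Rightarrow> ereal" where
  "CX g X D = (INF eps\<in>{0<..}. SUP A\<in>Aeps g eps X D.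
      ereal (1 / (2 * real CARD('n)) * (\<Sum>i\<in>UNIV. (l1norm (column i A))^2)))"

end

theory Submission
  imports Defs
begin


lemma col_bound:
  fixes x :: "real^'m" and D :: "real^'d^'m" and \<alpha> :: "real^'d"
  assumes kpos: "\<kappa> > 0" and B3: "0 \<in> K" and ep: "eps \<ge> 0"
    and B2: "\<And>\<alpha>. \<alpha> \<in> K \<Longrightarrow> \<kappa> * (l1norm \<alpha>)^2 \<le> (norm (D *v \<alpha>))^2"
    and H: "LL (chi K) x D \<alpha> \<le> ff (chi K) x D + ereal eps"
  shows "norm (x - D *v \<alpha>)^2 \<le> norm x^2 + 2*eps"
    and "\<kappa> * (l1norm \<alpha>)^2 \<le> 4 * (norm x^2 + 2*eps)"
    and "norm (x - D *v \<alpha>) * l1norm \<alpha> \<le> 2 * (norm x^2 + 2*eps) / sqrt \<kappa>"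
proof -
  have "ff (chi K) x D \<le> LL (chi K) x D 0" unfolding ff_def by (rule INF_lower) simp
  also have "\<dots> = ereal (1/2 * norm x^2)" using B3 by (simp add: LL_def chi_def)
  finally have f: "ff (chi K) x D + ereal eps \<le> ereal (1/2 * norm x^2 + eps)"
    by (metis add_right_mono plus_ereal.simps(1))
  have aK: "\<alpha> \<in> K"
  proof (rule ccontr)
    assume "\<alpha> \<notin> K"
    then have "LL (chi K) x D \<alpha> = \<infinity>" by (simp add: LL_def chi_def)
    with H f show False by auto
  qed
  then have "LL (chi K) x D \<alpha> = ereal (1/2 * norm (x - D *v \<alpha>)^2)" by (simp add: LL_def chi_def)
  with H f have "1/2 * norm (x - D *v \<alpha>)^2 \<le> 1/2 * norm x^2 + eps" using order.trans ereal_less_eq(3) by (metis (no_types))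
  then show r: "norm (x - D *v \<alpha>)^2 \<le> norm x^2 + 2*eps" by simp
  define a where "a = norm x"
  define b where "b = norm (x - D *v \<alpha>)"
  have ab: "a \<ge> 0" "b \<ge> 0" "b^2 \<le> a^2 + 2*eps" using r by (auto simp: a_def b_def)
  have "norm (D *v \<alpha>) \<le> a + b" unfolding a_def b_def
    using norm_triangle_ineq4[of x "x - D *v \<alpha>"] by simp
  then have "norm (D *v \<alpha>)^2 \<le> (a+b)^2" by (simp add: power_mono)
  also have "\<dots> \<le> 2*a^2 + 2*b^2" using sum_squares_ge_zero[of "a-b" 0] by (simp add: power2_eq_square algebra_simps)
  also have "\<dots> \<le> 4 * (a^2 + 2*eps)" using ab(3) ep by simp
  finally show l: "\<kappa> * (l1norm \<alpha>)^2 \<le> 4 * (norm x^2 + 2*eps)" using B2[OF aK] unfolding a_def by linarith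
  have S: "norm x^2 + 2*eps \<ge> 0" using ep zero_le_power2[of "norm x"] by linarith
  have l1: "l1norm \<alpha> \<ge> 0" unfolding l1norm_def by (simp add: sum_nonneg)
  have "(b * l1norm \<alpha>)^2 = b^2 * (l1norm \<alpha>)^2" by (simp add: power_mult_distrib)
  also have "\<dots> \<le> (norm x^2 + 2*eps) * (4 * (norm x^2 + 2*eps) / \<kappa>)"
    apply (rule mult_mono)
    using ab l kpos S by (auto simp: a_def field_simps)
  also have "\<dots> = (2 * (norm x^2 + 2*eps) / sqrt \<kappa>)^2"
    using kpos by (simp add: power_divide power_mult_distrib power2_eq_square algebra_simps)
  finally show "norm (x - D *v \<alpha>) * l1norm \<alpha> \<le> 2 * (norm x^2 + 2*eps) / sqrt \<kappa>"
    unfolding b_def[symmetric] apply (rule power2_le_imp_le)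
    using S kpos by simp
qed


lemma frob_sq_cols: "frob_sq (X::real^'n^'m) = (\<Sum>i\<in>UNIV. norm (column i X)^2)"
  unfolding frob_sq_def power2_norm_eq_inner
  unfolding column_def inner_vec_def
  by (simp add: power2_eq_square sum.swap[of _ "UNIV::'m set"])

lemma col_diff: "column k (X - D ** A) = column k X - D *v column k (A::real^'n^'d)"
  by (simp add: column_def matrix_matrix_mult_def matrix_vector_mult_def vec_eq_iff)

lemma frob_eq: "frob_inner ((R::real^'n^'m) ** transpose (A::real^'n^'d)) \<Delta>
   = (\<Sum>k\<in>UNIV. inner (column k R) (\<Delta> *v column k A))"
  unfolding frob_inner_def matrix_matrix_mult_def transpose_def matrix_vector_mult_def inner_vec_def column_def
  apply (simp add: sum_distrib_left sum_distrib_right algebra_simps)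
  apply (rule trans[OF sum.cong[OF refl sum.swap]])
  by (rule sum.swap)

lemma col_le_norm12: "norm (column j (M::real^'d^'m)) \<le> norm12 M"
  unfolding norm12_def by (rule Max_ge) auto

lemma mv_bound: assumes "norm12 (\<Delta>::real^'d^'m) \<le> 1"
  shows "norm (\<Delta> *v \<alpha>) \<le> l1norm \<alpha>"
proof -
  have "norm (\<Delta> *v \<alpha>) = norm (\<Sum>j\<in>UNIV. (\<alpha>$j) *s column j \<Delta>)" by (simp add: matrix_mult_sum)
  also have "\<dots> \<le> (\<Sum>j\<in>UNIV. norm ((\<alpha>$j) *s column j \<Delta>))" by (rule norm_sum)
  also have "\<dots> \<le> (\<Sum>j\<in>UNIV. \<bar>\<alpha>$j\<bar>)"
  proof (rule sum_mono)
    fix j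
    have "norm (column j \<Delta>) \<le> 1" using col_le_norm12[of j \<Delta>] assms by linarith
    then show "norm ((\<alpha>$j) *s column j \<Delta>) \<le> \<bar>\<alpha>$j\<bar>"
      by (simp add: scalar_mult_eq_scaleR mult_left_le)
  qed
  finally show ?thesis unfolding l1norm_def .
qed

lemma dual_bound:
  fixes R :: "real^'n^'m" and A :: "real^'n^'d"
  assumes "\<And>k. norm (column k R) * l1norm (column k A) \<le> c k"
  shows "dual12 (R ** transpose A) \<le> (\<Sum>k\<in>UNIV. c k)"
  unfolding dual12_def
proof (rule cSup_least)
  show "{frob_inner (R ** transpose A) \<Delta> | \<Delta>. norm12 \<Delta> \<le> 1} \<noteq> {}"
  proof -
    have "\<And>j. column j (0::real^'d^'m) = 0" by (simp add: column_def vec_eq_iff)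
    then have "norm12 (0::real^'d^'m) \<le> 1" by (simp add: norm12_def)
    then show ?thesis by blast
  qed
next
  fix v assume "v \<in> {frob_inner (R ** transpose A) \<Delta> | \<Delta>. norm12 \<Delta> \<le> 1}"
  then obtain \<Delta> where v: "v = frob_inner (R ** transpose A) \<Delta>" and d: "norm12 \<Delta> \<le> 1" by auto
  have "v = (\<Sum>k\<in>UNIV. inner (column k R) (\<Delta> *v column k A))" using v frob_eq by simp
  also have "\<dots> \<le> (\<Sum>k\<in>UNIV. c k)"
  proof (rule sum_mono)
    fix k
    have "inner (column k R) (\<Delta> *v column k A) \<le> norm (column k R) * norm (\<Delta> *v column k A)"
      by (rule norm_cauchy_schwarz)
    also have "\<dots> \<le> norm (column k R) * l1norm (column k A)"
      by (rule mult_left_mono[OF mv_bound[OF d]]) simp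
    also have "\<dots> \<le> c k" by (rule assms)
    finally show "inner (column k R) (\<Delta> *v column k A) \<le> c k" .
  qed
  finally show "v \<le> (\<Sum>k\<in>UNIV. c k)" .
qed

lemma inf_eps:
  fixes F :: "real \<Rightarrow> ereal"
  assumes "\<And>eps. eps > 0 \<Longrightarrow> F eps \<le> ereal (c + k*eps)" and k: "k \<ge> 0"
  shows "(INF eps\<in>{0<..}. F eps) \<le> ereal c"
proof (rule ereal_le_epsilon2)
  fix e :: real assume e: "e > 0"
  define eps where "eps = e / (k+1)"
  have ep: "eps > 0" using e k by (simp add: eps_def)
  have "k * eps \<le> e" using e k by (simp add: eps_def field_simps)
  have "(INF eps\<in>{0<..}. F eps) \<le> F eps" using ep by (intro INF_lower) simp
  also have "\<dots> \<le> ereal (c + k*eps)" using assms(1) ep by simp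
  also have "\<dots> \<le> ereal c + ereal e" using \<open>k * eps \<le> e\<close> by simp
  finally show "(INF eps\<in>{0<..}. F eps) \<le> ereal c + ereal e" .
qed

theorem mainTheorem8:
  fixes g :: "real^'d \<Rightarrow> ereal" and K :: "(real^'d) set"
    and DD :: "(real^'d^'m) set" and \<kappa> :: real
    and X :: "real^'n^'m" and D :: "real^'d^'m"
  assumes kpos: "\<kappa> > 0"
    and B1: "g = chi K"
    and B2: "\<And>\<alpha> D'. \<alpha> \<in> K \<Longrightarrow> D' \<in> DD \<Longrightarrow> \<kappa> * (l1norm \<alpha>)^2 \<le> (norm (D' *v \<alpha>))^2"
    and B3: "0 \<in> K"
    and D: "D \<in> DD"
  shows "LX g X D \<le> ereal (2 / (real CARD('n) * sqrt \<kappa>) * frob_sq X)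
       \<and> CX g X D \<le> ereal (2 / (real CARD('n) * \<kappa>) * frob_sq X)"
proof -
  define n where "n = real CARD('n)"
  have npos: "n > 0" unfolding n_def by simp
  have B2': "\<And>\<alpha>. \<alpha> \<in> K \<Longrightarrow> \<kappa> * (l1norm \<alpha>)^2 \<le> (norm (D *v \<alpha>))^2" using B2 D by blast
  have sk: "sqrt \<kappa> > 0" using kpos by simp
  have sumS: "(\<Sum>i\<in>UNIV. norm (column i X)^2 + 2*eps) = frob_sq X + 2*n*eps" for eps
    by (simp add: sum.distrib frob_sq_cols n_def)
  have colb: "\<And>i. LL (chi K) (column i X) D (column i A) \<le> ff (chi K) (column i X) D + ereal eps"
    if "A \<in> Aeps g eps X D" for A eps using that B1 by (simp add: Aeps_def)
  have L: "LX g X D \<le> ereal (2 / (n * sqrt \<kappa>) * frob_sq X)"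
    unfolding LX_def n_def[symmetric]
  proof (rule inf_eps[where k="4 / sqrt \<kappa>"])
    fix eps :: real assume ep: "eps > 0"
    show "(SUP A\<in>Aeps g eps X D. ereal (dual12 ((X - D ** A) ** transpose A) / n))
       \<le> ereal (2 / (n * sqrt \<kappa>) * frob_sq X + 4 / sqrt \<kappa> * eps)"
    proof (rule SUP_least)
      fix A assume A: "A \<in> Aeps g eps X D"
      have "dual12 ((X - D ** A) ** transpose A) \<le> (\<Sum>i\<in>UNIV. 2 * (norm (column i X)^2 + 2*eps) / sqrt \<kappa>)"
        apply (rule dual_bound)
        unfolding col_diff
        by (rule col_bound(3)[OF kpos B3 _ B2' colb[OF A]]) (use ep in simp)
      also have "\<dots> = (\<Sum>i\<in>UNIV. 2 / sqrt \<kappa> * (norm (column i X)^2 + 2*eps))" by (rule sum.cong) auto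
      also have "\<dots> = 2 / sqrt \<kappa> * (frob_sq X + 2*n*eps)"
        by (simp only: sum_distrib_left[symmetric] sumS)
      finally have "dual12 ((X - D ** A) ** transpose A) / n \<le> 2 / sqrt \<kappa> * (frob_sq X + 2*n*eps) / n"
        using npos by (intro divide_right_mono) auto
      also have "\<dots> = 2 / (n * sqrt \<kappa>) * frob_sq X + 4 / sqrt \<kappa> * eps"
        using npos sk by (simp add: field_simps)
      finally show "ereal (dual12 ((X - D ** A) ** transpose A) / n)
         \<le> ereal (2 / (n * sqrt \<kappa>) * frob_sq X + 4 / sqrt \<kappa> * eps)" by simp
    qed
  qed (use sk in simp)
  have C: "CX g X D \<le> ereal (2 / (n * \<kappa>) * frob_sq X)"
    unfolding CX_def n_def[symmetric]
  proof (rule inf_eps[where k="4 / \<kappa>"])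
    fix eps :: real assume ep: "eps > 0"
    show "(SUP A\<in>Aeps g eps X D. ereal (1 / (2 * n) * (\<Sum>i\<in>UNIV. (l1norm (column i A))^2)))
       \<le> ereal (2 / (n * \<kappa>) * frob_sq X + 4 / \<kappa> * eps)"
    proof (rule SUP_least)
      fix A assume A: "A \<in> Aeps g eps X D"
      have "(\<Sum>i\<in>UNIV. (l1norm (column i A))^2) \<le> (\<Sum>i\<in>UNIV. 4 * (norm (column i X)^2 + 2*eps) / \<kappa>)"
      proof (rule sum_mono)
        fix i
        have "\<kappa> * (l1norm (column i A))^2 \<le> 4 * (norm (column i X)^2 + 2*eps)"
          by (rule col_bound(2)[OF kpos B3 _ B2' colb[OF A]]) (use ep in simp)
        then show "(l1norm (column i A))^2 \<le> 4 * (norm (column i X)^2 + 2*eps) / \<kappa>"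
          using kpos by (simp add: field_simps)
      qed
      also have "\<dots> = (\<Sum>i\<in>UNIV. 4 / \<kappa> * (norm (column i X)^2 + 2*eps))" by (rule sum.cong) auto
      also have "\<dots> = 4 / \<kappa> * (frob_sq X + 2*n*eps)"
        by (simp only: sum_distrib_left[symmetric] sumS)
      finally have "1 / (2 * n) * (\<Sum>i\<in>UNIV. (l1norm (column i A))^2) \<le> 1 / (2 * n) * (4 / \<kappa> * (frob_sq X + 2*n*eps))"
        using npos by (intro mult_left_mono) auto
      also have "\<dots> = 2 / (n * \<kappa>) * frob_sq X + 4 / \<kappa> * eps"
        using npos kpos by (simp add: field_simps)
      finally show "ereal (1 / (2 * n) * (\<Sum>i\<in>UNIV. (l1norm (column i A))^2))
         \<le> ereal (2 / (n * \<kappa>) * frob_sq X + 4 / \<kappa> * eps)" by simp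
    qed
  qed (use kpos in simp)
  show ?thesis using L C unfolding n_def by simp
qed

end
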